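(* Let $A$ be a locally compact group and let $I$ be a linear functional on $C_0(A)$ such that $I(f)\geq I(l_h(f))$ for every non-negative $f\in C_0(A)$ and every $h\in A$. Then $I$ is left invariant, i.e. $I(l_h(f))=I(f)$ for all $h\in A$. The analogous statement holds with $r_h$ in place of $l_h$ (giving right invariance).
   Context: $C_0(A)$ is the space of continuous functions on $A$ with compact support; $l_h(f)(a)=f(ha)$ and $r_h(f)(a)=f(ah)$. *)

theory Defs
  imports "HOL-Analysis.Analysis"
begin

text \<open>The group is written additively (class topological_group_add, which does
  NOT assume commutativity).  Real-valued functions are used.\<close>

definition C0 :: "('a::topological_space \<Rightarrow> real) set" where
  "C0 = {f. continuous_on UNIV f \<and> compact (closure {x. f x \<noteq> 0})}"

definition lt :: "'a::plus \<Rightarrow> ('a \<Rightarrow> real) \<Rightarrow> ('a \<Rightarrow> real)" where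
  "lt h f = (\<lambda>a. f (h + a))"

definition rt :: "'a::plus \<Rightarrow> ('a \<Rightarrow> real) \<Rightarrow> ('a \<Rightarrow> real)" where
  "rt h f = (\<lambda>a. f (a + h))"

definition linear_functional_C0 :: "(('a::topological_space \<Rightarrow> real) \<Rightarrow> real) \<Rightarrow> bool" where
  "linear_functional_C0 I \<longleftrightarrow>
     (\<forall>f\<in>C0. \<forall>g\<in>C0. I (\<lambda>x. f x + g x) = I f + I g) \<and>
     (\<forall>f\<in>C0. \<forall>c::real. I (\<lambda>x. c * f x) = c * I f)"

end

theory Submission
  imports Defs
begin

lemma C0_comp:
  fixes f :: "'a::t2_space \<Rightarrow> real"
  assumes f: "f \<in> C0" and g: "continuous_on UNIV g" and k: "continuous_on UNIV (k::'a\<Rightarrow>'a)"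
    and kg: "\<And>x. k (g x) = x"
  shows "(\<lambda>x. f (g x)) \<in> C0"
proof -
  have fc: "continuous_on UNIV f" and cs: "compact (closure {x. f x \<noteq> 0})"
    using f by (auto simp: C0_def)
  have c1: "continuous_on UNIV (\<lambda>x. f (g x))"
    using continuous_on_compose[OF g, of f] continuous_on_subset[OF fc] by (simp add: o_def)
  have K: "compact (k ` closure {x. f x \<noteq> 0})"
    by (rule compact_continuous_image[OF continuous_on_subset[OF k] cs]) auto
  have sub: "{x. f (g x) \<noteq> 0} \<subseteq> k ` closure {x. f x \<noteq> 0}"
  proof
    fix x assume "x \<in> {x. f (g x) \<noteq> 0}"
    then have "g x \<in> closure {x. f x \<noteq> 0}" using closure_subset[of "{x. f x \<noteq> 0}"] by auto
    then show "x \<in> k ` closure {x. f x \<noteq> 0}" using kg[of x] by (metis image_eqI)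
  qed
  have "closure {x. f (g x) \<noteq> 0} \<subseteq> k ` closure {x. f x \<noteq> 0}"
    using closure_minimal[OF sub compact_imp_closed[OF K]] .
  then have "compact (closure {x. f (g x) \<noteq> 0})"
    using compact_Int_closed[OF K closed_closure, of "{x. f (g x) \<noteq> 0}"]
    by (simp add: Int_absorb1)
  with c1 show ?thesis by (simp add: C0_def)
qed

lemma C0_lt: "f \<in> C0 \<Longrightarrow> lt (h::'a::{topological_group_add,t2_space}) f \<in> C0"
  unfolding lt_def
  by (rule C0_comp[where k="\<lambda>x. -h + x"]) (auto intro!: continuous_intros simp: add.assoc[symmetric])

lemma C0_rt: "f \<in> C0 \<Longrightarrow> rt (h::'a::{topological_group_add,t2_space}) f \<in> C0"
  unfolding rt_def
  by (rule C0_comp[where k="\<lambda>x. x + -h"]) (auto intro!: continuous_intros simp: add.assoc)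

lemma C0_pos:
  assumes "f \<in> C0" shows "(\<lambda>x. max (f x) 0) \<in> C0"
proof -
  have fc: "continuous_on UNIV f" and cs: "compact (closure {x. f x \<noteq> 0})"
    using assms by (auto simp: C0_def)
  have c1: "continuous_on UNIV (\<lambda>x. max (f x) 0)"
    by (intro continuous_intros fc)
  have "closure {x. max (f x) 0 \<noteq> (0::real)} \<subseteq> closure {x. f x \<noteq> 0}"
    by (rule closure_mono) auto
  then have "compact (closure {x. max (f x) 0 \<noteq> (0::real)})"
    using compact_Int_closed[OF cs closed_closure, of "{x. max (f x) 0 \<noteq> (0::real)}"]
    by (simp add: Int_absorb1)
  with c1 show ?thesis by (simp add: C0_def)
qed

lemma C0_neg: "f \<in> C0 \<Longrightarrow> (\<lambda>x. - f x) \<in> C0"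
  unfolding C0_def by (auto intro!: continuous_intros)

lemma abstract_inv:
  fixes I :: "('a::topological_space \<Rightarrow> real) \<Rightarrow> real"
  assumes lin: "linear_functional_C0 I"
    and Sc: "\<And>f. f \<in> C0 \<Longrightarrow> S f \<in> C0"
    and Sinv: "\<And>f. S' (S f) = f"
    and Sd: "\<And>f g. S (\<lambda>x. f x + g x) = (\<lambda>x. S f x + S g x)"
    and Sm: "\<And>f c. S (\<lambda>x. c * f x) = (\<lambda>x. c * S f x)"
    and Spos: "\<And>f. (\<forall>x. f x \<ge> 0) \<Longrightarrow> \<forall>x. S f x \<ge> 0"
    and hyp: "\<And>f. f \<in> C0 \<Longrightarrow> (\<forall>x. f x \<ge> 0) \<Longrightarrow> I f \<ge> I (S f)"
    and hyp': "\<And>f. f \<in> C0 \<Longrightarrow> (\<forall>x. f x \<ge> 0) \<Longrightarrow> I f \<ge> I (S' f)"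
    and f: "f \<in> C0"
  shows "I (S f) = I f"
proof -
  have pos: "I (S g) = I g" if "g \<in> C0" "\<forall>x. g x \<ge> 0" for g
  proof -
    have "I g \<ge> I (S g)" using hyp that by auto
    moreover have "I (S g) \<ge> I (S' (S g))" using hyp' Sc Spos that by auto
    ultimately show ?thesis using Sinv by simp
  qed
  define p where "p = (\<lambda>x. max (f x) 0)"
  define n where "n = (\<lambda>x. max (- f x) 0)"
  have pC: "p \<in> C0" unfolding p_def by (rule C0_pos[OF f])
  have nC: "n \<in> C0" unfolding n_def by (rule C0_pos[OF C0_neg[OF f]])
  have p0: "\<forall>x. p x \<ge> 0" and n0: "\<forall>x. n x \<ge> 0" by (auto simp: p_def n_def)
  have fe: "f = (\<lambda>x. p x + (-1) * n x)" by (auto simp: p_def n_def)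
  have mC: "(\<lambda>x. (-1) * n x) \<in> C0" using nC C0_neg by simp
  have smC: "(\<lambda>x. (-1) * S n x) \<in> C0" using Sc[OF nC] C0_neg by simp
  have l1: "\<forall>f\<in>C0. \<forall>g\<in>C0. I (\<lambda>x. f x + g x) = I f + I g"
    and l2: "\<forall>f\<in>C0. \<forall>c::real. I (\<lambda>x. c * f x) = c * I f"
    using lin by (auto simp: linear_functional_C0_def)
  have "I f = I p + (-1) * I n" using l1 l2 pC nC mC fe by metis
  moreover have "S f = (\<lambda>x. S p x + (-1) * S n x)" using Sd[of p "\<lambda>x. (-1) * n x"] Sm[of "-1" n] fe by simp
  then have "I (S f) = I (S p) + (-1) * I (S n)" using l1 l2 Sc[OF pC] Sc[OF nC] smC by metis
  ultimately show ?thesis using pos pC nC p0 n0 by simp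
qed

theorem proposition5:
  fixes I :: "('a::{topological_group_add, t2_space} \<Rightarrow> real) \<Rightarrow> real"
  assumes lc: "locally_compact_space (euclidean :: 'a topology)"
    and lin: "linear_functional_C0 I"
  shows "((\<forall>f\<in>C0. \<forall>h. (\<forall>x. f x \<ge> 0) \<longrightarrow> I f \<ge> I (lt h f))
            \<longrightarrow> (\<forall>f\<in>C0. \<forall>h. I (lt h f) = I f))
       \<and> ((\<forall>f\<in>C0. \<forall>h. (\<forall>x. f x \<ge> 0) \<longrightarrow> I f \<ge> I (rt h f))
            \<longrightarrow> (\<forall>f\<in>C0. \<forall>h. I (rt h f) = I f))"
proof (intro conjI impI ballI allI)
  fix f :: "'a \<Rightarrow> real" and h :: 'a
  assume H: "\<forall>f\<in>C0. \<forall>h. (\<forall>x. f x \<ge> 0) \<longrightarrow> I f \<ge> I (lt h f)" and f: "f \<in> C0"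
  show "I (lt h f) = I f"
    by (rule abstract_inv[where S'="lt (-h)", OF lin C0_lt _ _ _ _ _ _ f])
       (use H in \<open>auto simp: lt_def add.assoc[symmetric]\<close>)
next
  fix f :: "'a \<Rightarrow> real" and h :: 'a
  assume H: "\<forall>f\<in>C0. \<forall>h. (\<forall>x. f x \<ge> 0) \<longrightarrow> I f \<ge> I (rt h f)" and f: "f \<in> C0"
  show "I (rt h f) = I f"
    by (rule abstract_inv[where S'="rt (-h)", OF lin C0_rt _ _ _ _ _ _ f])
       (use H in \<open>auto simp: rt_def add.assoc simp del: add_uminus_conv_diff\<close>)
qed

end
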